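(* Let $n\ge2$ and consider a line (path) on $n$ nodes, where the node at position $i$ initially has integer load $i$. Run any matching-based integral load-balancing algorithm against the following adversary: the graph is always a path on the $n$ nodes; in each round, after each pair of adjacent nodes in the matching exchanges load, the adversary swaps the two nodes of that pair if necessary so that the lighter one is at the smaller position (no other changes). Let $a_t[i]$ be the load of the node at position $i$ of the path at time $t$ ($a_1[i]=i$) and $p_t^k=\sum_{j=1}^k a_t[j]$ (with $p_t^0=0$). Then for all $t\ge1$ and all $k\in\{0,1,\dots,n\}$, $p_t^k\le p_1^k$.
   Context: Integral load balancing: loads are non-negative integers that remain integers, total load preserved. A matching-based algorithm: in each round, the pairs of nodes exchanging load form a matching of the current graph, and each matched pair redistributes its combined load between its two nodes as integers; unmatched nodes keep their load. Nodes may exchange information with all their neighbours each round. *)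

theory Defs
  imports Main
begin

text \<open>Loads on a path with positions 1..n are functions nat => nat (values outside
  1..n are irrelevant). A matching of the path is a set M of left endpoints i
  (edge {i, i+1}, 1 <= i < n) with no two consecutive indices.\<close>

definition path_matching :: "nat \<Rightarrow> nat set \<Rightarrow> bool" where
  "path_matching n M \<longleftrightarrow> M \<subseteq> {1..<n} \<and> (\<forall>i\<in>M. Suc i \<notin> M)"

definition adv_round :: "nat \<Rightarrow> (nat \<Rightarrow> nat) \<Rightarrow> (nat \<Rightarrow> nat) \<Rightarrow> bool" where
  "adv_round n a a' \<longleftrightarrow>
     (\<exists>M. path_matching n M \<and>
        (\<forall>i\<in>M. \<exists>x y. x + y = a i + a (Suc i) \<and>
                         a' i = min x y \<and> a' (Suc i) = max x y) \<and>
        (\<forall>j\<in>{1..n}. j \<notin> M \<and> j - 1 \<notin> M \<longrightarrow> a' j = a j))"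

definition prefix_load :: "(nat \<Rightarrow> nat) \<Rightarrow> nat \<Rightarrow> nat" where
  "prefix_load a k = (\<Sum>j=1..k. a j)"

end

theory Submission
  imports Defs
begin

lemma pl_Suc: "prefix_load a (Suc m) = prefix_load a m + a (Suc m)"
  unfolding prefix_load_def by simp

lemma pl_0: "prefix_load a 0 = 0"
  unfolding prefix_load_def by simp

lemma pl_init: "\<forall>i\<in>{1..n}. a i = i \<Longrightarrow> k \<le> n \<Longrightarrow> 2 * prefix_load a k = k * (k + 1)"
proof (induction k)
  case 0 then show ?case by (simp add: pl_0)
next
  case (Suc k)
  then have "a (Suc k) = Suc k" by auto
  with Suc show ?case by (simp add: pl_Suc algebra_simps)
qed

lemma pl_same:
  assumes M: "path_matching n M"
    and P: "\<forall>i\<in>M. \<exists>x y. x + y = a i + a (Suc i) \<and> a' i = min x y \<and> a' (Suc i) = max x y"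
    and U: "\<forall>j\<in>{1..n}. j \<notin> M \<and> j - 1 \<notin> M \<longrightarrow> a' j = a j"
  shows "k \<le> n \<Longrightarrow> k \<notin> M \<Longrightarrow> prefix_load a' k = prefix_load a k"
proof (induction k rule: less_induct)
  case (less k)
  show ?case
  proof (cases k)
    case 0 then show ?thesis by (simp add: pl_0)
  next
    case (Suc m)
    show ?thesis
    proof (cases "m \<in> M")
      case False
      then have "a' k = a k" using U less.prems Suc by auto
      moreover have "prefix_load a' m = prefix_load a m" using less Suc False by auto
      ultimately show ?thesis using Suc by (simp add: pl_Suc)
    next
      case True
      then have m1: "m \<ge> 1" using M unfolding path_matching_def by auto
      then obtain l where l: "m = Suc l" by (cases m) auto
      have "l \<notin> M" using True M l unfolding path_matching_def by auto
      then have "prefix_load a' l = prefix_load a l" using less Suc l by auto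
      moreover have "a' m + a' k = a m + a k" using P True Suc by force
      ultimately show ?thesis using Suc l by (simp add: pl_Suc)
    qed
  qed
qed

lemma step:
  assumes R: "adv_round n a a'"
    and H: "\<forall>k\<le>n. 2 * prefix_load a k \<le> k * (k + 1)"
  shows "\<forall>k\<le>n. 2 * prefix_load a' k \<le> k * (k + 1)"
proof (intro allI impI)
  fix k assume kn: "k \<le> n"
  obtain M where M: "path_matching n M"
    and P: "\<forall>i\<in>M. \<exists>x y. x + y = a i + a (Suc i) \<and> a' i = min x y \<and> a' (Suc i) = max x y"
    and U: "\<forall>j\<in>{1..n}. j \<notin> M \<and> j - 1 \<notin> M \<longrightarrow> a' j = a j"
    using R unfolding adv_round_def by blast
  note same = pl_same[OF M P U]
  show "2 * prefix_load a' k \<le> k * (k + 1)"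
  proof (cases "k \<in> M")
    case False
    then show ?thesis using same kn H by auto
  next
    case True
    then have k1: "1 \<le> k" "k < n" using M unfolding path_matching_def by auto
    then obtain l where l: "k = Suc l" by (cases k) auto
    have lM: "l \<notin> M" using True M l unfolding path_matching_def by auto
    have kM: "Suc k \<notin> M" using True M unfolding path_matching_def by auto
    have e1: "prefix_load a' l = prefix_load a l" using same lM l kn by auto
    have e2: "prefix_load a' (Suc k) = prefix_load a (Suc k)" using same kM k1 by auto
    obtain x y where xy: "x + y = a k + a (Suc k)" "a' k = min x y" "a' (Suc k) = max x y"
      using P True by blast
    have s1: "2 * a' k \<le> a k + a (Suc k)" using xy by auto
    have s2: "a' k + a' (Suc k) = a k + a (Suc k)" using xy by auto
    have h1: "2 * prefix_load a l \<le> l * (l + 1)" using H kn l by auto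
    have h2: "2 * prefix_load a (Suc k) \<le> Suc k * (Suc k + 1)" using H[rule_format, of "Suc k"] k1 by auto
    have pk: "prefix_load a' k = prefix_load a l + a' k" using e1 l by (simp add: pl_Suc)
    have pSk: "prefix_load a (Suc k) = prefix_load a l + a k + a (Suc k)" using l by (simp add: pl_Suc)
    have A: "4 * prefix_load a' k \<le> 2 * prefix_load a l + 2 * prefix_load a (Suc k)"
      using pk pSk s1 by linarith
    have B: "l * (l + 1) + Suc k * (Suc k + 1) = 2 * (k * (k + 1)) + 2"
      using l by (simp add: algebra_simps)
    have C: "2 * (2 * prefix_load a' k) \<le> 2 * (k * (k + 1)) + 2" using A B h1 h2 by linarith
    have D: "even (k * (k + 1))" by simp
    from C have "2 * prefix_load a' k \<le> k * (k + 1) + 1" by linarith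
    with D show ?thesis
      by (metis Suc_eq_plus1 dvd_triv_left le_Suc_eq odd_one even_add)
  qed
qed

theorem lemma4:
  fixes n :: nat and a :: "nat \<Rightarrow> nat \<Rightarrow> nat"
  assumes "n \<ge> 2"
    and "\<forall>i\<in>{1..n}. a 1 i = i"
    and "\<forall>t\<ge>1. adv_round n (a t) (a (Suc t))"
  shows "\<forall>t\<ge>1. \<forall>k\<in>{0..n}. prefix_load (a t) k \<le> prefix_load (a 1) k"
proof (intro allI impI ballI)
  fix t :: nat and k assume t: "1 \<le> t" and k: "k \<in> {0..n}"
  have inv: "\<forall>k\<le>n. 2 * prefix_load (a t) k \<le> k * (k + 1)"
    using t
  proof (induction t rule: dec_induct)
    case base
    then show ?case using pl_init[OF assms(2)] by auto
  next
    case (step m)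
    then show ?case using Submission.step assms(3) by auto
  qed
  have "2 * prefix_load (a 1) k = k * (k + 1)" using pl_init[OF assms(2)] k by auto
  with inv k show "prefix_load (a t) k \<le> prefix_load (a 1) k" by auto
qed

end
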